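(* For every integer $\nu \ge 0$ the following identities hold: \[ \sum_{k=0}^{2\nu} (-1)^{k}\, \binom{2\nu+2}{k+2}\, 2^{-k}\, \binom{2k}{k}=\frac{1}{3}(4\nu+3)\,\frac{(\frac{3}{2})_{\nu}}{(1)_{\nu}}, \qquad \sum_{k=0}^{2\nu+1} (-1)^{k} \,\binom{2\nu+3}{k+2} \,2^{-k} \,\binom{2k}{k}=2\,\frac{(\frac{5}{2})_{\nu}}{(1)_{\nu}}, \] \[ \sum_{k=0}^{2\nu} (-1)^{k}\, \binom{2\nu+3}{k+3}\, 2^{-k}\, \binom{2k}{k}=\frac{1}{5}(8\nu+5)\,\frac{(\frac{5}{2})_{\nu}}{(1)_{\nu}}, \qquad \sum_{k=0}^{2\nu+1} (-1)^{k} \,\binom{2\nu+4}{k+3} \,2^{-k} \,\binom{2k}{k}=\frac{1}{5}(8\nu+15)\,\frac{(\frac{5}{2})_{\nu}}{(1)_{\nu}}. \]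
   Context: For a complex number $a$ and integer $n\ge 0$, $(a)_n$ denotes the Pochhammer symbol: $(a)_0=1$ and $(a)_n=a(a+1)\cdots(a+n-1)$ for $n\ge1$; in particular $(1)_\nu=\nu!$. *)

theory Defs
  imports Complex_Main
begin

end

theory Submission
  imports Defs
begin

definition cc :: "nat \<Rightarrow> real" where
  "cc k = (-1::real)^k * (1/2)^k * real ((2*k) choose k)"

definition SS :: "nat \<Rightarrow> nat \<Rightarrow> real" where
  "SS n j = (\<Sum>k<Suc n. real (n choose (k+j)) * cc k)"

definition PP :: "nat \<Rightarrow> real" where
  "PP m = pochhammer (1/2) m / pochhammer 1 m"

lemma central_rec: "Suc k * ((2*Suc k) choose Suc k) = 2*(2*k+1)*((2*k) choose k)"
proof -
  define m where "m = 2*k+1"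
  have e1: "2*Suc k = Suc m" unfolding m_def by simp
  have e2: "2*k = m - 1" unfolding m_def by simp
  have e3: "m - k = Suc k" unfolding m_def by simp
  have a: "Suc m * (m choose k) = (Suc m choose Suc k) * Suc k"
    by (rule Suc_times_binomial_eq)
  have b: "(m - k) * (m choose k) = m * ((m - 1) choose k)"
    by (rule binomial_absorb_comp)
  have "Suc k * ((2*Suc k) choose Suc k) = Suc m * (m choose k)"
    unfolding e1 using a by (simp only: mult.commute)
  also have "Suc m = 2 * Suc k" unfolding m_def by simp
  also have "2 * Suc k * (m choose k) = 2 * ((m - k) * (m choose k))" unfolding e3 by simp
  also have "\<dots> = 2 * (m * ((m - 1) choose k))" using b by simp
  also have "\<dots> = 2*(2*k+1)*((2*k) choose k)" unfolding e2 by (simp add: m_def)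
  finally show ?thesis .
qed

lemma cc_rec: "real (Suc k) * cc (Suc k) = - (2*real k+1) * cc k"
proof -
  have "real (Suc k * ((2*Suc k) choose Suc k)) = real (2*(2*k+1)*((2*k) choose k))"
    using central_rec by metis
  hence h: "real (Suc k) * real ((2*Suc k) choose Suc k) = 2*(2*real k+1)* real ((2*k) choose k)"
    by (simp del: binomial_Suc_Suc add: algebra_simps)
  have "real (Suc k) * cc (Suc k) = (-1)^k * (1/2)^k * (-1/2) * (real (Suc k) * real ((2*Suc k) choose Suc k))"
    unfolding cc_def by (simp del: binomial_Suc_Suc of_nat_Suc add: algebra_simps)
  also have "\<dots> = - (2*real k+1) * cc k" unfolding h cc_def by (simp add: algebra_simps)
  finally show ?thesis .
qed

lemma sum_ext_aux:
  assumes "n < M + j"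
  shows "(\<Sum>k<M. real (n choose (k+j)) * cc k) = (\<Sum>k<M+L. real (n choose (k+j)) * cc k)"
  by (rule sum.mono_neutral_left) (use assms in auto)

lemma SS_ext:
  assumes "n < M + j"
  shows "(\<Sum>k<M. real (n choose (k+j)) * cc k) = SS n j"
proof -
  have "(\<Sum>k<M. real (n choose (k+j)) * cc k) = (\<Sum>k<M+Suc n. real (n choose (k+j)) * cc k)"
    by (rule sum_ext_aux) (use assms in auto)
  also have "\<dots> = (\<Sum>k<Suc n+M. real (n choose (k+j)) * cc k)" by (simp add: add.commute)
  also have "\<dots> = SS n j" unfolding SS_def by (rule sum_ext_aux[symmetric]) simp
  finally show ?thesis .
qed

lemma SS_Suc: "SS (Suc n) (Suc j) = SS n (Suc j) + SS n j"
proof -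
  have "SS (Suc n) (Suc j) = (\<Sum>k<Suc (Suc n). real (n choose (k+Suc j)) * cc k + real (n choose (k+j)) * cc k)"
    unfolding SS_def by (intro sum.cong) (auto simp: algebra_simps)
  also have "\<dots> = (\<Sum>k<Suc (Suc n). real (n choose (k+Suc j)) * cc k) + (\<Sum>k<Suc (Suc n). real (n choose (k+j)) * cc k)"
    by (simp add: sum.distrib)
  also have "(\<Sum>k<Suc (Suc n). real (n choose (k+Suc j)) * cc k) = SS n (Suc j)" by (rule SS_ext) simp
  also have "(\<Sum>k<Suc (Suc n). real (n choose (k+j)) * cc k) = SS n j" by (rule SS_ext) simp
  finally show ?thesis .
qed

lemma SS_0: "SS 0 (Suc j) = 0" "SS 0 0 = 1"
  by (auto simp: SS_def cc_def)

lemma binom_h2: "real (Suc k) * real (m choose Suc k) = (real m - real k) * real (m choose k)"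
proof -
  have "real (Suc k) * real (m choose Suc k) = of_nat (Suc k) * (real m gchoose Suc k)"
    by (simp only: binomial_gbinomial)
  also have "\<dots> = real m * ((real m - 1) gchoose k)" by (rule gbinomial_absorption)
  also have "\<dots> = (real m - of_nat k) * (real m gchoose k)" by (rule gbinomial_absorb_comp[symmetric])
  also have "\<dots> = (real m - real k) * real (m choose k)" by (simp only: binomial_gbinomial of_nat_id)
  finally show ?thesis .
qed

lemma binom_h3: "real (n+2) * real (n+1) * real (n choose k)
   = (real (n+2) - real k) * (real (n+1) - real k) * real ((n+2) choose k)"
proof -
  have e1: "real (n+2) - 1 = real (n+1)" by simp
  have e2: "real (n+1) - 1 = real n" by simp
  have a: "(real (n+2) - of_nat k) * (real (n+2) gchoose k) = real (n+2) * (real (n+1) gchoose k)"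
    using gbinomial_absorb_comp[of "real (n+2)" k] unfolding e1 .
  have b: "(real (n+1) - of_nat k) * (real (n+1) gchoose k) = real (n+1) * (real n gchoose k)"
    using gbinomial_absorb_comp[of "real (n+1)" k] unfolding e2 .
  have "(real (n+2) - real k) * (real (n+1) - real k) * real ((n+2) choose k)
     = (real (n+1) - real k) * ((real (n+2) - of_nat k) * (real (n+2) gchoose k))"
    by (simp add: binomial_gbinomial)
  also have "\<dots> = real (n+2) * ((real (n+1) - of_nat k) * (real (n+1) gchoose k))"
    unfolding a by simp
  also have "\<dots> = real (n+2) * real (n+1) * real (n choose k)"
    unfolding b by (simp add: binomial_gbinomial)
  finally show ?thesis by simp
qed

definition GG :: "nat \<Rightarrow> nat \<Rightarrow> real" where
  "GG n k = - (real k * real k) * real ((n+2) choose k) * cc k / real (n+2)"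

lemma term_id:
  fixes n k :: nat
  shows "(real (n+2) * real ((n+2) choose k) - real (n+1) * real (n choose k)) * cc k = GG n (Suc k) - GG n k"
proof -
  define N where "N = real (n+2)"
  define B where "B = real ((n+2) choose k)"
  define B' where "B' = real ((n+2) choose Suc k)"
  define A where "A = real (n choose k)"
  have N0: "N > 0" unfolding N_def by simp
  have h1: "real (Suc k) * cc (Suc k) = - (2*real k+1) * cc k" by (rule cc_rec)
  have h2: "real (Suc k) * B' = (N - real k) * B" unfolding B'_def B_def N_def by (rule binom_h2)
  have h3: "N * (N - 1) * A = (N - real k) * (N - 1 - real k) * B"
    using binom_h3[of n k] unfolding N_def A_def B_def by simp
  have "GG n (Suc k) = - ((real (Suc k) * B') * (real (Suc k) * cc (Suc k))) / N"
    unfolding GG_def B'_def N_def by (simp add: power2_eq_square algebra_simps)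
  also have "\<dots> = (N - real k) * B * (2*real k+1) * cc k / N" unfolding h1 h2 by (simp add: algebra_simps)
  finally have g1: "GG n (Suc k) = (N - real k) * B * (2*real k+1) * cc k / N" .
  have g0: "GG n k = - (real k * real k) * B * cc k / N" unfolding GG_def B_def N_def by simp
  have "(real (n+2) * real ((n+2) choose k) - real (n+1) * real (n choose k)) * cc k
      = (N * B - (N - 1) * A) * cc k" unfolding N_def A_def B_def by simp
  also have "\<dots> = (N * N * B - N * (N - 1) * A) * cc k / N" using N0 by (simp add: field_simps)
  also have "\<dots> = (N * N * B - (N - real k) * (N - 1 - real k) * B) * cc k / N" unfolding h3 ..
  also have "\<dots> = GG n (Suc k) - GG n k" unfolding g1 g0 using N0
    by (simp add: field_simps power2_eq_square)
  finally show ?thesis .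
qed

lemma SS_ext0: "n < M \<Longrightarrow> (\<Sum>k<M. real (n choose k) * cc k) = SS n 0"
  using SS_ext[of n M 0] by simp

lemma a_rec: "real (n+2) * SS (n+2) 0 = real (n+1) * SS n 0"
proof -
  have "(\<Sum>k<n+3. (real (n+2) * real ((n+2) choose k) - real (n+1) * real (n choose k)) * cc k)
        = (\<Sum>k<n+3. GG n (Suc k) - GG n k)"
    by (intro sum.cong refl term_id)
  also have "\<dots> = GG n (n+3) - GG n 0" by (rule sum_lessThan_telescope)
  also have "\<dots> = 0" by (simp add: GG_def)
  finally have z: "(\<Sum>k<n+3. (real (n+2) * real ((n+2) choose k) - real (n+1) * real (n choose k)) * cc k) = 0" .
  have "(\<Sum>k<n+3. (real (n+2) * real ((n+2) choose k) - real (n+1) * real (n choose k)) * cc k)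
     = real (n+2) * (\<Sum>k<n+3. real ((n+2) choose k) * cc k) - real (n+1) * (\<Sum>k<n+3. real (n choose k) * cc k)"
    by (simp add: sum_distrib_left sum_subtractf algebra_simps)
  also have "\<dots> = real (n+2) * SS (n+2) 0 - real (n+1) * SS n 0"
    by (simp add: SS_ext0)
  finally show ?thesis using z by simp
qed

lemma PP_Suc: "PP (Suc m) = PP m * (2 * real m + 1) / (2 * real m + 2)"
proof -
  have p: "pochhammer (1::real) m > 0" by (simp add: pochhammer_pos)
  show ?thesis unfolding PP_def pochhammer_Suc using p
    by (simp add: field_simps)
qed

lemma SS0_closed: "SS (2*m) 0 = PP m \<and> SS (2*m+1) 0 = 0"
proof (induction m)
  case 0
  show ?case by (simp add: SS_def cc_def PP_def binomial_eq_0)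
next
  case (Suc m)
  have e1: "real (2*m+2) * SS (2*m+2) 0 = real (2*m+1) * PP m"
    using a_rec[of "2*m"] Suc.IH by simp
  have e2: "real (2*m+3) * SS (2*m+3) 0 = 0"
    using a_rec[of "2*m+1"] Suc.IH by (simp add: numeral_eq_Suc)
  have "SS (2*m+2) 0 = PP (Suc m)" using e1 unfolding PP_Suc
    by (simp add: field_simps)
  moreover have "SS (2*m+3) 0 = 0" using e2 by simp
  ultimately show ?case by (simp add: numeral_eq_Suc)
qed

lemma SS1_closed: "SS (2*m) 1 = (2*real m) * PP m \<and> SS (2*m+1) 1 = (2*real m+1) * PP m"
proof (induction m)
  case 0
  show ?case by (simp add: SS_def cc_def PP_def binomial_eq_0)
next
  case (Suc m)
  have o: "SS (2*m+1) 0 = (0) * PP m" using SS0_closed[of m] by simp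
  have e': "SS (2*Suc m) 0 = (1) * PP (Suc m)" using SS0_closed[of "Suc m"] by simp
  have io: "SS (2*m+1) 1 = (2*real m+1) * PP m" using Suc.IH by simp
  have r1: "SS (2*Suc m) 1 = SS (2*m+1) 1 + SS (2*m+1) 0"
    using SS_Suc[of "2*m+1" 0] by (simp add: numeral_eq_Suc)
  have r2: "SS (2*Suc m+1) 1 = SS (2*Suc m) 1 + SS (2*Suc m) 0"
    using SS_Suc[of "2*Suc m" 0] by (simp add: numeral_eq_Suc)
  have ev: "SS (2*Suc m) 1 = (2*(real m + 1)) * PP (Suc m)"
    unfolding r1 o io unfolding PP_Suc by (simp add: field_simps) (simp add: algebra_simps)?
  have od: "SS (2*Suc m+1) 1 = (2*(real m + 1)+1) * PP (Suc m)"
    unfolding r2 ev e' by (simp add: field_simps) (simp add: algebra_simps)?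
  show ?case using ev od by simp
qed

lemma SS2_closed: "SS (2*m) 2 = (2*real m*(4*real m-1)/3) * PP m \<and> SS (2*m+1) 2 = (4*real m*(2*real m+1)/3) * PP m"
proof (induction m)
  case 0
  show ?case by (simp add: SS_def cc_def PP_def binomial_eq_0)
next
  case (Suc m)
  have o: "SS (2*m+1) 1 = (2*real m+1) * PP m" using SS1_closed[of m] by simp
  have e': "SS (2*Suc m) 1 = (2*(real m + 1)) * PP (Suc m)" using SS1_closed[of "Suc m"] by simp
  have io: "SS (2*m+1) 2 = (4*real m*(2*real m+1)/3) * PP m" using Suc.IH by simp
  have r1: "SS (2*Suc m) 2 = SS (2*m+1) 2 + SS (2*m+1) 1"
    using SS_Suc[of "2*m+1" 1] by (simp add: numeral_eq_Suc)
  have r2: "SS (2*Suc m+1) 2 = SS (2*Suc m) 2 + SS (2*Suc m) 1"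
    using SS_Suc[of "2*Suc m" 1] by (simp add: numeral_eq_Suc)
  have ev: "SS (2*Suc m) 2 = (2*(real m + 1)*(4*(real m + 1)-1)/3) * PP (Suc m)"
    unfolding r1 o io unfolding PP_Suc by (simp add: field_simps) (simp add: algebra_simps)?
  have od: "SS (2*Suc m+1) 2 = (4*(real m + 1)*(2*(real m + 1)+1)/3) * PP (Suc m)"
    unfolding r2 ev e' by (simp add: field_simps) (simp add: algebra_simps)?
  show ?case using ev od by simp
qed

lemma SS3_closed: "SS (2*m) 3 = (2*real m*(2*real m-2)*(8*real m-1)/15) * PP m \<and> SS (2*m+1) 3 = (2*real m*(8*real m-3)*(2*real m+1)/15) * PP m"
proof (induction m)
  case 0
  show ?case by (simp add: SS_def cc_def PP_def binomial_eq_0)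
next
  case (Suc m)
  have o: "SS (2*m+1) 2 = (4*real m*(2*real m+1)/3) * PP m" using SS2_closed[of m] by simp
  have e': "SS (2*Suc m) 2 = (2*(real m + 1)*(4*(real m + 1)-1)/3) * PP (Suc m)" using SS2_closed[of "Suc m"] by simp
  have io: "SS (2*m+1) 3 = (2*real m*(8*real m-3)*(2*real m+1)/15) * PP m" using Suc.IH by simp
  have r1: "SS (2*Suc m) 3 = SS (2*m+1) 3 + SS (2*m+1) 2"
    using SS_Suc[of "2*m+1" 2] by (simp add: numeral_eq_Suc)
  have r2: "SS (2*Suc m+1) 3 = SS (2*Suc m) 3 + SS (2*Suc m) 2"
    using SS_Suc[of "2*Suc m" 2] by (simp add: numeral_eq_Suc)
  have ev: "SS (2*Suc m) 3 = (2*(real m + 1)*(2*(real m + 1)-2)*(8*(real m + 1)-1)/15) * PP (Suc m)"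
    unfolding r1 o io unfolding PP_Suc by (simp add: field_simps) (simp add: algebra_simps)?
  have od: "SS (2*Suc m+1) 3 = (2*(real m + 1)*(8*(real m + 1)-3)*(2*(real m + 1)+1)/15) * PP (Suc m)"
    unfolding r2 ev e' by (simp add: field_simps) (simp add: algebra_simps)?
  show ?case using ev od by simp
qed

lemma alg4:
  fixes x p :: real
  assumes "x \<ge> 0"
  shows "2*(x+2)*(2*(x+2)-2)*(8*(x+2)-1)/15 * (p*(2*x+1)/(2*x+2)*(2*x+3)/(2*x+4))
       = (8*x+15)*(2*x+1)*(2*x+3)/15 * p"
proof -
  define D where "D = (2*x+2)*(2*x+4)"
  have D0: "D \<noteq> 0" unfolding D_def using assms by simp
  have a: "2*(x+2)*(2*(x+2)-2)*(8*(x+2)-1)/15 = D*((8*x+15)/15)"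
    unfolding D_def by (simp add: field_simps)
  have b: "p*(2*x+1)/(2*x+2)*(2*x+3)/(2*x+4) = (p*(2*x+1)*(2*x+3))/D"
    unfolding D_def by simp
  show ?thesis unfolding a b using D0 by (simp add: field_simps)
qed

lemma conv: "n < M + 1 + j \<Longrightarrow>
  (\<Sum>k=0..M. (-1::real)^k * real (n choose (k+j)) * (1/2)^k * real ((2*k) choose k)) = SS n j"
proof -
  assume h: "n < M + 1 + j"
  have "(\<Sum>k=0..M. (-1::real)^k * real (n choose (k+j)) * (1/2)^k * real ((2*k) choose k))
      = (\<Sum>k<Suc M. real (n choose (k+j)) * cc k)"
    unfolding atLeast0AtMost lessThan_Suc_atMost[symmetric] cc_def
    by (intro sum.cong refl) (simp add: algebra_simps)
  also have "\<dots> = SS n j" by (rule SS_ext) (use h in simp)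
  finally show ?thesis .
qed

lemma poch32: "pochhammer (3/2::real) n = (2*real n+1) * pochhammer (1/2) n"
proof -
  have "pochhammer (1/2::real) (Suc n) = 1/2 * pochhammer (1/2 + 1) n" by (rule pochhammer_rec)
  moreover have "pochhammer (1/2::real) (Suc n) = pochhammer (1/2) n * (1/2 + real n)" by (rule pochhammer_Suc)
  ultimately show ?thesis by (simp add: field_simps)
qed

lemma poch52: "pochhammer (5/2::real) n = (2*real n+1) * (2*real n+3) / 3 * pochhammer (1/2) n"
proof -
  have "pochhammer (3/2::real) (Suc n) = 3/2 * pochhammer (3/2 + 1) n" by (rule pochhammer_rec)
  moreover have "pochhammer (3/2::real) (Suc n) = pochhammer (3/2) n * (3/2 + real n)" by (rule pochhammer_Suc)
  ultimately show ?thesis unfolding poch32 by (simp add: field_simps)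
qed

theorem mainTheorem2:
  fixes \<nu> :: nat
  shows "((\<Sum>k=0..2*\<nu>. (-1::real)^k * real ((2*\<nu>+2) choose (k+2)) * (1/2)^k * real ((2*k) choose k))
           = 1/3 * (4 * real \<nu> + 3) * pochhammer (3/2) \<nu> / pochhammer 1 \<nu>) \<and>
        ((\<Sum>k=0..2*\<nu>+1. (-1::real)^k * real ((2*\<nu>+3) choose (k+2)) * (1/2)^k * real ((2*k) choose k))
           = 2 * pochhammer (5/2) \<nu> / pochhammer 1 \<nu>) \<and>
        ((\<Sum>k=0..2*\<nu>. (-1::real)^k * real ((2*\<nu>+3) choose (k+3)) * (1/2)^k * real ((2*k) choose k))
           = 1/5 * (8 * real \<nu> + 5) * pochhammer (5/2) \<nu> / pochhammer 1 \<nu>) \<and>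
        ((\<Sum>k=0..2*\<nu>+1. (-1::real)^k * real ((2*\<nu>+4) choose (k+3)) * (1/2)^k * real ((2*k) choose k))
           = 1/5 * (8 * real \<nu> + 15) * pochhammer (5/2) \<nu> / pochhammer 1 \<nu>)"
proof -
  have P1: "PP (Suc \<nu>) = PP \<nu> * (2 * real \<nu> + 1) / (2 * real \<nu> + 2)" by (rule PP_Suc)
  have P2: "PP (Suc (Suc \<nu>)) = PP \<nu> * (2 * real \<nu> + 1) / (2 * real \<nu> + 2) * (2 * real \<nu> + 3) / (2 * real \<nu> + 4)"
    unfolding PP_Suc[of "Suc \<nu>"] P1 by (simp add: algebra_simps)
  have pos: "pochhammer (1::real) \<nu> > 0" by (simp add: pochhammer_pos)
  have d1: "2*real \<nu> + 2 > 0" "2*real \<nu> + 4 > 0" "real \<nu> + 1 > 0" "pochhammer (1::real) \<nu> * (real \<nu> + 1) > 0" by (simp_all add: pochhammer_pos)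
  have PPd: "PP \<nu> = pochhammer (1/2) \<nu> / pochhammer 1 \<nu>" by (rule PP_def)
  have q1: "SS (2*\<nu>+2) 2 = 2*(real \<nu>+1)*(4*(real \<nu>+1)-1)/3 * PP (Suc \<nu>)"
    using SS2_closed[of "Suc \<nu>"] by simp
  have q2: "SS (2*\<nu>+3) 2 = 4*(real \<nu>+1)*(2*(real \<nu>+1)+1)/3 * PP (Suc \<nu>)"
    using SS2_closed[of "Suc \<nu>"] by (simp add: numeral_eq_Suc)
  have q3: "SS (2*\<nu>+3) 3 = 2*(real \<nu>+1)*(8*(real \<nu>+1)-3)*(2*(real \<nu>+1)+1)/15 * PP (Suc \<nu>)"
    using SS3_closed[of "Suc \<nu>"] by (simp add: numeral_eq_Suc)
  have q4: "SS (2*\<nu>+4) 3 = 2*(real \<nu>+2)*(2*(real \<nu>+2)-2)*(8*(real \<nu>+2)-1)/15 * PP (Suc (Suc \<nu>))"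
    using SS3_closed[of "Suc (Suc \<nu>)"] by (simp add: numeral_eq_Suc algebra_simps)
  have s0: "(\<Sum>k=0..2*\<nu>. (-1::real)^k * real ((2*\<nu>+2) choose (k+2)) * (1/2)^k * real ((2*k) choose k)) = SS (2*\<nu>+2) 2" by (rule conv) simp
  have t0: "SS (2*\<nu>+2) 2 = 1/3 * (4 * real \<nu> + 3) * pochhammer (3/2) \<nu> / pochhammer 1 \<nu>"
    unfolding q1 P1 P2 PPd poch32 poch52 using pos d1 by (simp add: field_simps) (simp add: algebra_simps)?
  have s1: "(\<Sum>k=0..2*\<nu>+1. (-1::real)^k * real ((2*\<nu>+3) choose (k+2)) * (1/2)^k * real ((2*k) choose k)) = SS (2*\<nu>+3) 2" by (rule conv) simp
  have t1: "SS (2*\<nu>+3) 2 = 2 * pochhammer (5/2) \<nu> / pochhammer 1 \<nu>"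
    unfolding q2 P1 P2 PPd poch32 poch52 using pos d1 by (simp add: field_simps) (simp add: algebra_simps)?
  have s2: "(\<Sum>k=0..2*\<nu>. (-1::real)^k * real ((2*\<nu>+3) choose (k+3)) * (1/2)^k * real ((2*k) choose k)) = SS (2*\<nu>+3) 3" by (rule conv) simp
  have t2: "SS (2*\<nu>+3) 3 = 1/5 * (8 * real \<nu> + 5) * pochhammer (5/2) \<nu> / pochhammer 1 \<nu>"
    unfolding q3 P1 P2 PPd poch32 poch52 using pos d1 by (simp add: field_simps) (simp add: algebra_simps)?
  have s3: "(\<Sum>k=0..2*\<nu>+1. (-1::real)^k * real ((2*\<nu>+4) choose (k+3)) * (1/2)^k * real ((2*k) choose k)) = SS (2*\<nu>+4) 3" by (rule conv) simp
  have t3: "SS (2*\<nu>+4) 3 = 1/5 * (8 * real \<nu> + 15) * pochhammer (5/2) \<nu> / pochhammer 1 \<nu>"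
  proof -
    have "SS (2*\<nu>+4) 3 = (8 * real \<nu> + 15) * (2 * real \<nu> + 1) * (2 * real \<nu> + 3) / 15 * PP \<nu>"
      unfolding q4 P2 by (rule alg4) simp
    also have "\<dots> = 1/5 * (8 * real \<nu> + 15) * pochhammer (5/2) \<nu> / pochhammer 1 \<nu>"
      unfolding PPd poch52 using pos by (simp add: field_simps)
    finally show ?thesis .
  qed
  show ?thesis using s0 s1 s2 s3 t0 t1 t2 t3 by simp
qed

end
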